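(* Let $S\subseteq V$ and $u\in V\setminus S$, and write $\Delta(S,u)=r(S\cup\{u\})-r(S)$. If $S\cap A_u=\emptyset$, then $$\Delta(S,u)=\Big(n_u-\Big|\bigcup_{j\in N_u\cap S}N_j\Big|\Big)\mathbb{P}\{Z_u>\tau\}.$$ If $S\cap A_u\neq\emptyset$, let $v$ be the element of $S\cap A_u$ of maximal depth (the closest ancestor of $u$ in $S$); then $$\Delta(S,u)=\Big(n_u-\Big|\bigcup_{j\in N_u\cap S}N_j\Big|\Big)\Big(\mathbb{P}\{Z_u>\tau\}-\mathbb{P}\{Z_v>\tau\}\Big).$$ In both cases $\Delta(S,u)\ge 0$.
   Context: Let $G=(V,E)$ be a finite tree with $|V|=n$, rooted at a node $s$ (the infection source). For a node $i$: $d_i$ is its depth (number of edges on the path from $s$ to $i$); $A_i$ is the set of ancestors of $i$ (strict, including its parent); $N_i$ is the set of descendants of $i$ (strict, not including $i$); $n_i=|N_i|$. Each edge $e$ carries an independent random variable $X_e\sim\mathrm{Exp}(\lambda)$ with $\lambda>0$, and $Z_i=\sum_{e \text{ on the path from } s \text{ to } i}X_e$ is the infection time of $i$ (so $Z_s=0$; $Z_i$ is a sum of $d_i$ i.i.d. $\mathrm{Exp}(\lambda)$ variables). The immunization time $\tau\ge 0$ is a single random variable, common to all vaccinated nodes and independent of $(X_e)_{e\in E}$. For $S\subseteq V$ (the vaccinated set), a node $i\in S$ becomes immune iff $Z_i>\tau$, and an immune node saves all its descendants. The expected total reward is defined as $r(S)=\mathbb{E}\big[\,\big|\bigcup_{i\in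 S:\,Z_i>\tau}N_i\big|\,\big]$, the expected number of nodes that are descendants of at least one immune vaccinated node. *)

theory Defs
  imports "HOL-Probability.Probability"
begin

(* A finite tree rooted at s, given by a parent map par (par i is the parent of i for i \<noteq> s;
   par s is irrelevant). The edge joining par i and i is identified with its child endpoint i \<in> V - {s}. *)
definition rooted_tree :: "'a set \<Rightarrow> 'a \<Rightarrow> ('a \<Rightarrow> 'a) \<Rightarrow> bool" where
  "rooted_tree V s par \<longleftrightarrow> finite V \<and> s \<in> V \<and> (\<forall>i\<in>V - {s}. par i \<in> V)
     \<and> (\<forall>i\<in>V. \<exists>k. (par ^^ k) i = s)"

definition depth :: "('a \<Rightarrow> 'a) \<Rightarrow> 'a \<Rightarrow> 'a \<Rightarrow> nat" where
  "depth par s i = (LEAST k. (par ^^ k) i = s)"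

definition anc :: "('a \<Rightarrow> 'a) \<Rightarrow> 'a \<Rightarrow> 'a \<Rightarrow> 'a set" where
  "anc par s i = {(par ^^ k) i | k. 1 \<le> k \<and> k \<le> depth par s i}"

definition desc :: "'a set \<Rightarrow> ('a \<Rightarrow> 'a) \<Rightarrow> 'a \<Rightarrow> 'a \<Rightarrow> 'a set" where
  "desc V par s i = {j \<in> V. i \<in> anc par s j}"

definition path_edges :: "('a \<Rightarrow> 'a) \<Rightarrow> 'a \<Rightarrow> 'a \<Rightarrow> 'a set" where
  "path_edges par s i = {(par ^^ k) i | k. k < depth par s i}"

definition infect_time :: "('a \<Rightarrow> 'a) \<Rightarrow> 'a \<Rightarrow> ('a \<Rightarrow> 'w \<Rightarrow> real) \<Rightarrow> 'a \<Rightarrow> 'w \<Rightarrow> real" where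
  "infect_time par s X i \<omega> = (\<Sum>e\<in>path_edges par s i. X e \<omega>)"

definition reward :: "'w measure \<Rightarrow> 'a set \<Rightarrow> ('a \<Rightarrow> 'a) \<Rightarrow> 'a \<Rightarrow> ('a \<Rightarrow> 'w \<Rightarrow> real)
    \<Rightarrow> ('w \<Rightarrow> real) \<Rightarrow> 'a set \<Rightarrow> real" where
  "reward M V par s X \<tau> S = (\<integral>\<omega>. real (card (\<Union>i\<in>{i\<in>S. infect_time par s X i \<omega> > \<tau> \<omega>}.
       desc V par s i)) \<partial>M)"

end

theory Submission imports Defs begin

context
  fixes V s par
  assumes RT: "rooted_tree V s par"
begin

lemma dep_s: "x \<in> V \<Longrightarrow> (par ^^ depth par s x) x = s"
  using RT unfolding rooted_tree_def depth_def by (metis (mono_tags, lifting) LeastI)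

lemma dep_le: "(par ^^ k) x = s \<Longrightarrow> depth par s x \<le> k"
  unfolding depth_def by (rule Least_le)

lemma dep_lt: "k < depth par s x \<Longrightarrow> (par ^^ k) x \<noteq> s"
  using dep_le by fastforce

lemma in_V: "x \<in> V \<Longrightarrow> k \<le> depth par s x \<Longrightarrow> (par ^^ k) x \<in> V"
proof (induction k)
  case 0 then show ?case by simp
next
  case (Suc k)
  then have "(par ^^ k) x \<in> V" "(par ^^ k) x \<noteq> s" using dep_lt by auto
  then show ?case using RT unfolding rooted_tree_def by auto
qed

lemma dep_par: "x \<in> V \<Longrightarrow> k \<le> depth par s x \<Longrightarrow> depth par s ((par ^^ k) x) = depth par s x - k"
proof -
  assume x: "x \<in> V" and k: "k \<le> depth par s x"
  have "(par ^^ (depth par s x - k)) ((par ^^ k) x) = s"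
    using dep_s[OF x] k by (metis funpow_add le_add_diff_inverse2 o_apply)
  then have 1: "depth par s ((par ^^ k) x) \<le> depth par s x - k" by (rule dep_le)
  have "(par ^^ (depth par s ((par ^^ k) x) + k)) x = s"
    using dep_s[OF in_V[OF x k]] by (simp add: funpow_add)
  then have "depth par s x \<le> depth par s ((par ^^ k) x) + k" by (rule dep_le)
  with 1 show ?thesis by linarith
qed

lemma anc_iff: "a \<in> anc par s x \<longleftrightarrow> (\<exists>k. 1 \<le> k \<and> k \<le> depth par s x \<and> a = (par ^^ k) x)"
  unfolding anc_def by auto

lemma desc_iff: "j \<in> desc V par s i \<longleftrightarrow> j \<in> V \<and> i \<in> anc par s j"
  unfolding desc_def by auto

lemma anc_V: "x \<in> V \<Longrightarrow> a \<in> anc par s x \<Longrightarrow> a \<in> V"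
  using in_V anc_iff by auto

lemma anc_dep: "x \<in> V \<Longrightarrow> a \<in> anc par s x \<Longrightarrow> depth par s a < depth par s x"
  using dep_par anc_iff by fastforce

lemma anc_trans: "c \<in> V \<Longrightarrow> b \<in> anc par s c \<Longrightarrow> a \<in> anc par s b \<Longrightarrow> a \<in> anc par s c"
proof -
  assume c: "c \<in> V" and b: "b \<in> anc par s c" and a: "a \<in> anc par s b"
  obtain k where k: "1 \<le> k" "k \<le> depth par s c" "b = (par ^^ k) c" using b anc_iff by auto
  obtain m where m: "1 \<le> m" "m \<le> depth par s b" "a = (par ^^ m) b" using a anc_iff by auto
  have "depth par s b = depth par s c - k" using dep_par[OF c k(2)] k(3) by simp
  moreover have "a = (par ^^ (m + k)) c" using k m by (simp add: funpow_add)
  ultimately show ?thesis unfolding anc_iff using k m by (intro exI[of _ "m + k"]) auto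
qed

lemma anc_chain: "x \<in> V \<Longrightarrow> a \<in> anc par s x \<Longrightarrow> b \<in> anc par s x \<Longrightarrow>
   a = b \<or> a \<in> anc par s b \<or> b \<in> anc par s a"
proof -
  assume x: "x \<in> V" and a: "a \<in> anc par s x" and b: "b \<in> anc par s x"
  obtain k where k: "1 \<le> k" "k \<le> depth par s x" "a = (par ^^ k) x" using a anc_iff by auto
  obtain m where m: "1 \<le> m" "m \<le> depth par s x" "b = (par ^^ m) x" using b anc_iff by auto
  show ?thesis
  proof (cases k m rule: linorder_cases)
    case less
    have "b = (par ^^ (m - k)) a" using k m less by (metis funpow_add le_add_diff_inverse2 less_imp_le o_apply)
    moreover have "m - k \<le> depth par s a" using dep_par[OF x k(2)] k m by simp
    ultimately have "b \<in> anc par s a" unfolding anc_iff using less by (intro exI[of _ "m - k"]) auto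
    then show ?thesis by simp
  next
    case equal then show ?thesis using k m by simp
  next
    case greater
    have "a = (par ^^ (k - m)) b" using k m greater by (metis funpow_add le_add_diff_inverse2 less_imp_le o_apply)
    moreover have "k - m \<le> depth par s b" using dep_par[OF x m(2)] k m by simp
    ultimately have "a \<in> anc par s b" unfolding anc_iff using greater by (intro exI[of _ "k - m"]) auto
    then show ?thesis by simp
  qed
qed

lemma pe_sub: "x \<in> V \<Longrightarrow> a \<in> anc par s x \<Longrightarrow> path_edges par s a \<subseteq> path_edges par s x"
proof
  fix e assume x: "x \<in> V" and a: "a \<in> anc par s x" and e: "e \<in> path_edges par s a"
  obtain k where k: "1 \<le> k" "k \<le> depth par s x" "a = (par ^^ k) x" using a anc_iff by auto
  obtain m where m: "m < depth par s a" "e = (par ^^ m) a" using e unfolding path_edges_def by auto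
  have "depth par s a = depth par s x - k" using dep_par[OF x k(2)] k by simp
  then have "m + k < depth par s x" "e = (par ^^ (m + k)) x" using m k by (auto simp: funpow_add)
  then show "e \<in> path_edges par s x" unfolding path_edges_def by blast
qed

lemma pe_V: "x \<in> V \<Longrightarrow> path_edges par s x \<subseteq> V - {s}"
  unfolding path_edges_def using in_V dep_lt by fastforce

lemma pe_fin: "finite (path_edges par s x)"
  unfolding path_edges_def by simp

lemma Z_mono: "x \<in> V \<Longrightarrow> a \<in> anc par s x \<Longrightarrow> (\<forall>e\<in>V - {s}. 0 \<le> X e \<omega>) \<Longrightarrow>
   infect_time par s X a \<omega> \<le> infect_time par s X x \<omega>"
  unfolding infect_time_def
  by (rule sum_mono2[OF pe_fin pe_sub]) (use pe_V in auto)

end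

lemma card_union_meas:
  fixes P :: "'a \<Rightarrow> 'w \<Rightarrow> bool" and Dd :: "'a \<Rightarrow> 'b set"
  assumes fV: "finite V" and fT: "finite T" and DV: "\<And>i. i \<in> T \<Longrightarrow> Dd i \<subseteq> V"
    and Pm: "\<And>i. i \<in> T \<Longrightarrow> Measurable.pred M (P i)"
  shows "(\<lambda>\<omega>. real (card (\<Union>i\<in>{i\<in>T. P i \<omega>}. Dd i))) \<in> borel_measurable M"
proof -
  have eq: "real (card (\<Union>i\<in>{i\<in>T. P i \<omega>}. Dd i)) = (\<Sum>x\<in>V. if (\<exists>i\<in>T. P i \<omega> \<and> x \<in> Dd i) then 1 else 0)" for \<omega>
  proof -
    have "(\<Union>i\<in>{i\<in>T. P i \<omega>}. Dd i) = {x\<in>V. \<exists>i\<in>T. P i \<omega> \<and> x \<in> Dd i}" using DV by auto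
    then show ?thesis using fV by (simp add: sum.inter_filter[symmetric])
  qed
  have "(\<lambda>\<omega>. (\<Sum>x\<in>V. if (\<exists>i\<in>T. P i \<omega> \<and> x \<in> Dd i) then 1 else 0) :: real) \<in> borel_measurable M"
    using Pm fT by measurable
  then show ?thesis by (simp add: eq)
qed

theorem mainTheorem3:
  fixes M :: "'w measure" and V :: "'a set" and s :: 'a and par :: "'a \<Rightarrow> 'a"
    and X :: "'a \<Rightarrow> 'w \<Rightarrow> real" and \<tau> :: "'w \<Rightarrow> real" and l :: real
    and S :: "'a set" and u :: 'a
  assumes "prob_space M"
    and "rooted_tree V s par"
    and "l > 0"
    and "\<And>e. e \<in> V - {s} \<Longrightarrow> distributed M lborel (X e) (exponential_density l)"
    and "prob_space.indep_vars M (\<lambda>_. borel)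
           (\<lambda>k. case k of None \<Rightarrow> \<tau> | Some e \<Rightarrow> X e) (insert None (Some ` (V - {s})))"
    and "AE \<omega> in M. \<tau> \<omega> \<ge> 0"
    and "S \<subseteq> V" and "u \<in> V - S"
  shows
    "(S \<inter> anc par s u = {} \<longrightarrow>
        reward M V par s X \<tau> (S \<union> {u}) - reward M V par s X \<tau> S
        = (real (card (desc V par s u)) - real (card (\<Union>j\<in>desc V par s u \<inter> S. desc V par s j)))
          * measure M {\<omega>\<in>space M. infect_time par s X u \<omega> > \<tau> \<omega>})
     \<and> (\<forall>v. v \<in> S \<inter> anc par s u \<and> (\<forall>w\<in>S \<inter> anc par s u. depth par s w \<le> depth par s v) \<longrightarrow>
        reward M V par s X \<tau> (S \<union> {u}) - reward M V par s X \<tau> S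
        = (real (card (desc V par s u)) - real (card (\<Union>j\<in>desc V par s u \<inter> S. desc V par s j)))
          * (measure M {\<omega>\<in>space M. infect_time par s X u \<omega> > \<tau> \<omega>}
             - measure M {\<omega>\<in>space M. infect_time par s X v \<omega> > \<tau> \<omega>}))
     \<and> reward M V par s X \<tau> (S \<union> {u}) - reward M V par s X \<tau> S \<ge> 0"
proof -
  interpret P: prob_space M by fact
  note RT = assms(2)
  have fV: "finite V" using RT unfolding rooted_tree_def by auto
  have uV: "u \<in> V" using assms(8) by auto
  let ?Z = "infect_time par s X"
  define D where "D = desc V par s u"
  define W where "W = (\<Union>j\<in>D \<inter> S. desc V par s j)"
  define B where "B T \<omega> = (\<Union>i\<in>{i\<in>T. ?Z i \<omega> > \<tau> \<omega>}. desc V par s i)" for T \<omega>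
  define E where "E \<omega> = (if ?Z u \<omega> > \<tau> \<omega> then D else {})" for \<omega>
  have descV: "desc V par s i \<subseteq> V" for i unfolding desc_def by auto
  have DV: "D \<subseteq> V" unfolding D_def by (rule descV)
  have WD: "W \<subseteq> D"
    unfolding W_def D_def using anc_trans[OF RT] by (auto simp: desc_iff[OF RT])
  have fD: "finite D" using finite_subset[OF DV fV] .
  have BV: "B T \<omega> \<subseteq> V" for T \<omega> unfolding B_def using descV by auto
  have fB: "finite (B T \<omega>)" for T \<omega> using finite_subset[OF BV fV] .
  have BU: "B (S \<union> {u}) \<omega> = B S \<omega> \<union> E \<omega>" for \<omega>
    unfolding B_def E_def D_def by auto
  have diffpt: "real (card (B (S \<union> {u}) \<omega>)) - real (card (B S \<omega>)) = real (card (E \<omega> - B S \<omega>))" for \<omega>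
  proof -
    have "B (S \<union> {u}) \<omega> = B S \<omega> \<union> (E \<omega> - B S \<omega>)" using BU by auto
    moreover have "finite (E \<omega> - B S \<omega>)" using fD unfolding E_def by auto
    moreover have "card (B S \<omega> \<union> (E \<omega> - B S \<omega>)) = card (B S \<omega>) + card (E \<omega> - B S \<omega>)"
      by (rule card_Un_disjoint) (use fB \<open>finite (E \<omega> - B S \<omega>)\<close> in auto)
    ultimately have "card (B (S \<union> {u}) \<omega>) = card (B S \<omega>) + card (E \<omega> - B S \<omega>)"
      by simp
    then show ?thesis by simp
  qed
  have rew: "reward M V par s X \<tau> T = (\<integral>\<omega>. real (card (B T \<omega>)) \<partial>M)" for T
    unfolding reward_def B_def ..
  have Xm: "X e \<in> borel_measurable M" if "e \<in> V - {s}" for e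
    using distributed_measurable[OF assms(4)[OF that]] by simp
  have \<tau>m: "\<tau> \<in> borel_measurable M"
    using assms(5) unfolding P.indep_vars_def by force
  have Zm: "?Z i \<in> borel_measurable M" if "i \<in> V" for i
    unfolding infect_time_def using Xm pe_V[OF RT that] by (intro borel_measurable_sum) auto
  have Zp: "Measurable.pred M (\<lambda>\<omega>. ?Z i \<omega> > \<tau> \<omega>)" if "i \<in> V" for i
    using Zm[OF that] \<tau>m by measurable
  have Bm: "(\<lambda>\<omega>. real (card (B T \<omega>))) \<in> borel_measurable M" if "T \<subseteq> V" for T
    unfolding B_def using that fV finite_subset[OF that fV]
    by (intro card_union_meas[where V=V] Zp descV) auto
  have Bi: "integrable M (\<lambda>\<omega>. real (card (B T \<omega>)))" if "T \<subseteq> V" for T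
  proof (rule P.integrable_const_bound[where B="real (card V)"])
    show "AE x in M. norm (real (card (B T x))) \<le> real (card V)"
      using BV fV by (auto intro!: card_mono)
  qed (rule Bm[OF that])
  have SV: "S \<subseteq> V" "S \<union> {u} \<subseteq> V" using assms(7) uV by auto
  have rdiff: "reward M V par s X \<tau> (S \<union> {u}) - reward M V par s X \<tau> S
      = (\<integral>\<omega>. real (card (B (S \<union> {u}) \<omega>)) - real (card (B S \<omega>)) \<partial>M)"
    unfolding rew using Bi[OF SV(1)] Bi[OF SV(2)] by simp
  have dm: "(\<lambda>\<omega>. real (card (B (S \<union> {u}) \<omega>)) - real (card (B S \<omega>))) \<in> borel_measurable M"
    using Bm[OF SV(1)] Bm[OF SV(2)] by measurable
  have AEX: "AE \<omega> in M. \<forall>e\<in>V - {s}. 0 \<le> X e \<omega>"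
  proof (rule AE_finite_allI)
    show "finite (V - {s})" using fV by simp
    fix e assume e: "e \<in> V - {s}"
    show "AE \<omega> in M. 0 \<le> X e \<omega>"
      using P.distributed_AE2[OF assms(4)[OF e], of "\<lambda>x. 0 \<le> x"]
      by (auto simp: exponential_density_def not_less)
  qed
  have c1: "reward M V par s X \<tau> (S \<union> {u}) - reward M V par s X \<tau> S
        = (real (card D) - real (card W)) * measure M {\<omega>\<in>space M. ?Z u \<omega> > \<tau> \<omega>}"
    if S1: "S \<inter> anc par s u = {}"
  proof -
    have "AE \<omega> in M. real (card (B (S \<union> {u}) \<omega>)) - real (card (B S \<omega>))
         = (real (card D) - real (card W)) * indicator {\<omega>\<in>space M. ?Z u \<omega> > \<tau> \<omega>} \<omega>"
      using AEX AE_space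
    proof eventually_elim
      case (elim \<omega>)
      note elim = elim(1)
      have "E \<omega> - B S \<omega> = (if ?Z u \<omega> > \<tau> \<omega> then D - W else {})"
      proof (cases "?Z u \<omega> > \<tau> \<omega>")
        case True
        have "D \<inter> B S \<omega> = W"
        proof
          show "W \<subseteq> D \<inter> B S \<omega>"
          proof
            fix x assume x: "x \<in> W"
            then obtain j where j: "j \<in> D" "j \<in> S" "x \<in> desc V par s j" unfolding W_def by auto
            have "?Z u \<omega> \<le> ?Z j \<omega>"
              using Z_mono[where X=X and \<omega>=\<omega>, OF RT _ _ elim] j uV unfolding D_def desc_def by auto
            then show "x \<in> D \<inter> B S \<omega>" using x WD j True unfolding B_def by auto
          qed
        next
          show "D \<inter> B S \<omega> \<subseteq> W"
          proof
            fix x assume x: "x \<in> D \<inter> B S \<omega>"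
            then obtain i where i: "i \<in> S" "x \<in> desc V par s i" unfolding B_def by auto
            have xV: "x \<in> V" "u \<in> anc par s x" "i \<in> anc par s x" using x i unfolding D_def desc_def by auto
            have "i = u \<or> i \<in> anc par s u \<or> u \<in> anc par s i" using anc_chain[OF RT xV] by blast
            then have "i \<in> D" using i S1 assms(7,8) unfolding D_def desc_def by auto
            then show "x \<in> W" using i unfolding W_def by auto
          qed
        qed
        then show ?thesis using True unfolding E_def by auto
      next
        case False then show ?thesis unfolding E_def by auto
      qed
      then show ?case unfolding diffpt using WD fD \<open>\<omega> \<in> space M\<close>
        by (auto simp: card_Diff_subset finite_subset of_nat_diff card_mono indicator_def)
    qed
    then have "(\<integral>\<omega>. real (card (B (S \<union> {u}) \<omega>)) - real (card (B S \<omega>)) \<partial>M)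
       = (\<integral>\<omega>. (real (card D) - real (card W)) * indicator {\<omega>\<in>space M. ?Z u \<omega> > \<tau> \<omega>} \<omega> \<partial>M)"
      by (intro integral_cong_AE dm) (use Zp[OF uV] in measurable)
    then show ?thesis unfolding rdiff by (simp add: Int_absorb2[OF Collect_restrict])
  qed
  have c2: "reward M V par s X \<tau> (S \<union> {u}) - reward M V par s X \<tau> S
        = (real (card D) - real (card W)) * (measure M {\<omega>\<in>space M. ?Z u \<omega> > \<tau> \<omega>}
             - measure M {\<omega>\<in>space M. ?Z v \<omega> > \<tau> \<omega>})"
    if v: "v \<in> S \<inter> anc par s u" and vmax: "\<forall>w\<in>S \<inter> anc par s u. depth par s w \<le> depth par s v" for v
  proof -
    have vV: "v \<in> V" using v assms(7) by auto
    have Dv: "D \<subseteq> desc V par s v"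
      unfolding D_def using v uV anc_trans[OF RT] by (auto simp: desc_iff[OF RT])
    have "AE \<omega> in M. real (card (B (S \<union> {u}) \<omega>)) - real (card (B S \<omega>))
         = (real (card D) - real (card W)) * indicator {\<omega>\<in>space M. ?Z u \<omega> > \<tau> \<omega>} \<omega>
          - (real (card D) - real (card W)) * indicator {\<omega>\<in>space M. ?Z v \<omega> > \<tau> \<omega>} \<omega>"
      using AEX AE_space
    proof eventually_elim
      case (elim \<omega>)
      note elim = elim(1)
      have Zvu: "?Z v \<omega> \<le> ?Z u \<omega>" using Z_mono[where X=X and \<omega>=\<omega>, OF RT uV _ elim] v by auto
      have "E \<omega> - B S \<omega> = (if ?Z u \<omega> > \<tau> \<omega> \<and> \<not> ?Z v \<omega> > \<tau> \<omega> then D - W else {})"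
      proof (cases "?Z u \<omega> > \<tau> \<omega> \<and> \<not> ?Z v \<omega> > \<tau> \<omega>")
        case True
        have "D \<inter> B S \<omega> = W"
        proof
          show "W \<subseteq> D \<inter> B S \<omega>"
          proof
            fix x assume x: "x \<in> W"
            then obtain j where j: "j \<in> D" "j \<in> S" "x \<in> desc V par s j" unfolding W_def by auto
            have "?Z u \<omega> \<le> ?Z j \<omega>"
              using Z_mono[where X=X and \<omega>=\<omega>, OF RT _ _ elim] j uV unfolding D_def desc_def by auto
            then show "x \<in> D \<inter> B S \<omega>" using x WD j True unfolding B_def by auto
          qed
        next
          show "D \<inter> B S \<omega> \<subseteq> W"
          proof
            fix x assume x: "x \<in> D \<inter> B S \<omega>"
            then obtain i where i: "i \<in> S" "x \<in> desc V par s i" "?Z i \<omega> > \<tau> \<omega>" unfolding B_def by auto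
            have xV: "x \<in> V" "u \<in> anc par s x" "i \<in> anc par s x" using x i unfolding D_def desc_def by auto
            have "i = u \<or> i \<in> anc par s u \<or> u \<in> anc par s i" using anc_chain[OF RT xV] by blast
            moreover have "i \<notin> anc par s u"
            proof
              assume iu: "i \<in> anc par s u"
              have "depth par s i \<le> depth par s v" using vmax iu i by auto
              moreover have "i = v \<or> i \<in> anc par s v \<or> v \<in> anc par s i"
                using anc_chain[OF RT uV iu] v by auto
              ultimately have "i = v \<or> i \<in> anc par s v"
                using anc_dep[OF RT] anc_V[OF RT uV iu] by fastforce
              then have "?Z i \<omega> \<le> ?Z v \<omega>" using Z_mono[where X=X and \<omega>=\<omega>, OF RT vV _ elim] by auto
              then show False using i True by auto
            qed
            ultimately have "i \<in> D" using i assms(7,8) unfolding D_def desc_def by auto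
            then show "x \<in> W" using i unfolding W_def by auto
          qed
        qed
        then show ?thesis using True unfolding E_def by auto
      next
        case False
        show ?thesis
        proof (cases "?Z u \<omega> > \<tau> \<omega>")
          case True
          then have "?Z v \<omega> > \<tau> \<omega>" using False by auto
          then have "desc V par s v \<subseteq> B S \<omega>" using v unfolding B_def by auto
          then show ?thesis using False Dv unfolding E_def by auto
        qed (use False in \<open>auto simp: E_def\<close>)
      qed
      then show ?case unfolding diffpt using WD fD \<open>\<omega> \<in> space M\<close> Zvu
        by (auto simp: card_Diff_subset finite_subset of_nat_diff card_mono indicator_def)
    qed
    then have "(\<integral>\<omega>. real (card (B (S \<union> {u}) \<omega>)) - real (card (B S \<omega>)) \<partial>M)
       = (\<integral>\<omega>. (real (card D) - real (card W)) * indicator {\<omega>\<in>space M. ?Z u \<omega> > \<tau> \<omega>} \<omega>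
          - (real (card D) - real (card W)) * indicator {\<omega>\<in>space M. ?Z v \<omega> > \<tau> \<omega>} \<omega> \<partial>M)"
      by (intro integral_cong_AE dm) (use Zp[OF uV] Zp[OF vV] in measurable)
    also have "\<dots> = (real (card D) - real (card W)) * measure M {\<omega>\<in>space M. ?Z u \<omega> > \<tau> \<omega>}
          - (real (card D) - real (card W)) * measure M {\<omega>\<in>space M. ?Z v \<omega> > \<tau> \<omega>}"
    proof -
      have i1: "integrable M (\<lambda>\<omega>. (real (card D) - real (card W)) * indicator {\<omega>\<in>space M. ?Z u \<omega> > \<tau> \<omega>} \<omega>)"
        proof -
          have "{\<omega>\<in>space M. ?Z u \<omega> > \<tau> \<omega>} \<in> sets M" using Zp[OF uV] by measurable
          then show ?thesis by (intro integrable_mult_right integrable_real_indicator) (auto simp: less_top[symmetric])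
        qed
      have i2: "integrable M (\<lambda>\<omega>. (real (card D) - real (card W)) * indicator {\<omega>\<in>space M. ?Z v \<omega> > \<tau> \<omega>} \<omega>)"
        proof -
          have "{\<omega>\<in>space M. ?Z v \<omega> > \<tau> \<omega>} \<in> sets M" using Zp[OF vV] by measurable
          then show ?thesis by (intro integrable_mult_right integrable_real_indicator) (auto simp: less_top[symmetric])
        qed
      show ?thesis using Bochner_Integration.integral_diff[OF i1 i2] by (simp add: Int_absorb2[OF Collect_restrict])
    qed
    finally show ?thesis unfolding rdiff by (simp add: algebra_simps)
  qed
  have c3: "reward M V par s X \<tau> (S \<union> {u}) - reward M V par s X \<tau> S \<ge> 0"
    unfolding rdiff by (intro integral_nonneg_AE AE_I2) (unfold diffpt, simp)
  show ?thesis using c1 c2 c3 unfolding D_def W_def by blast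
qed

end
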